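(* Let $\theta_{12},\gamma_{12},\theta_{23},\gamma_{23}\in(0,1)$ and for $(i,j)\in\{(1,2),(2,3)\}$ let $g_{\{i,j\}}(x_i,x_j)=\frac{x_i}{\theta_{ij}}+\frac{x_j}{\gamma_{ij}}+\Big(1-\frac{1}{\theta_{ij}}-\frac{1}{\gamma_{ij}}\Big)\min(x_i,x_j)$ for $x_i,x_j\ge0$. Let $g(x_1,x_2,x_3)=g_{\{1,2\}}(x_1,x_2)+g_{\{2,3\}}(x_2,x_3)-x_2$ and $g_{\{1,3\}}(x_1,x_3):=\min_{x_2\ge0}g(x_1,x_2,x_3)$. Then for all $x_1,x_3\ge0$, $$g_{\{1,3\}}(x_1,x_3)=\frac{x_1}{\max(\theta_{12},\theta_{23})}+\frac{x_3}{\max(\gamma_{12},\gamma_{23})}+\Big(1-\frac{1}{\max(\theta_{12},\theta_{23})}-\frac{1}{\max(\gamma_{12},\gamma_{23})}\Big)\min(x_1,x_3).$$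
   Context: This is the chain geometric extremal graphical model on vertices $\{1,2,3\}$ with edges $\{1,2\},\{2,3\}$ in standard exponential margins; $g_{\{1,3\}}$ is its bivariate marginal gauge. *)

theory Defs
  imports Complex_Main
begin

definition gpair :: "real \<Rightarrow> real \<Rightarrow> real \<Rightarrow> real \<Rightarrow> real" where
  "gpair \<theta> \<gamma> xi xj = xi / \<theta> + xj / \<gamma> + (1 - 1/\<theta> - 1/\<gamma>) * min xi xj"

definition gchain :: "real \<Rightarrow> real \<Rightarrow> real \<Rightarrow> real \<Rightarrow> real \<Rightarrow> real \<Rightarrow> real \<Rightarrow> real" where
  "gchain \<theta>12 \<gamma>12 \<theta>23 \<gamma>23 x1 x2 x3 =
     gpair \<theta>12 \<gamma>12 x1 x2 + gpair \<theta>23 \<gamma>23 x2 x3 - x2"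

end

theory Submission
  imports Defs
begin

lemma G_le: fixes a b c d x1 x2 x3 :: real
  assumes "a\<ge>1" "b\<ge>1" "c\<ge>1" "d\<ge>1" "x1\<ge>0" "x2\<ge>0" "x3\<ge>0"
  shows "x1*min a c + x3*min b d + (1 - min a c - min b d)*min x1 x3
   \<le> (x1*a + x2*b + (1-a-b)*min x1 x2) + (x2*c + x3*d + (1-c-d)*min x2 x3) - x2"
  using assms
  by (cases "x1 \<le> x2"; cases "x2 \<le> x3"; cases "x1 \<le> x3"; cases "a \<le> c"; cases "b \<le> d";
      insert mult_nonneg_nonneg[of "a-1" "x1-x2"] mult_nonneg_nonneg[of "a-1" "x1-x3"] mult_nonneg_nonneg[of "a-1" "x2-x1"] mult_nonneg_nonneg[of "a-1" "x2-x3"] mult_nonneg_nonneg[of "a-1" "x3-x1"] mult_nonneg_nonneg[of "a-1" "x3-x2"] mult_nonneg_nonneg[of "a-1" "x1"] mult_nonneg_nonneg[of "a-1" "x2"] mult_nonneg_nonneg[of "a-1" "x3"] mult_nonneg_nonneg[of "b-1" "x1-x2"] mult_nonneg_nonneg[of "b-1" "x1-x3"] mult_nonneg_nonneg[of "b-1" "x2-x1"] mult_nonneg_nonneg[of "b-1" "x2-x3"] mult_nonneg_nonneg[of "b-1" "x3-x1"] mult_nonneg_nonneg[of "b-1" "x3-x2"] mult_nonneg_nonneg[of "b-1" "x1"] mult_nonneg_nonneg[of "b-1" "x2"] mult_nonneg_nonneg[of "b-1" "x3"] mult_nonneg_nonneg[of "c-1" "x1-x2"] mult_nonneg_nonneg[of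 "c-1" "x1-x3"] mult_nonneg_nonneg[of "c-1" "x2-x1"] mult_nonneg_nonneg[of "c-1" "x2-x3"] mult_nonneg_nonneg[of "c-1" "x3-x1"] mult_nonneg_nonneg[of "c-1" "x3-x2"] mult_nonneg_nonneg[of "c-1" "x1"] mult_nonneg_nonneg[of "c-1" "x2"] mult_nonneg_nonneg[of "c-1" "x3"] mult_nonneg_nonneg[of "d-1" "x1-x2"] mult_nonneg_nonneg[of "d-1" "x1-x3"] mult_nonneg_nonneg[of "d-1" "x2-x1"] mult_nonneg_nonneg[of "d-1" "x2-x3"] mult_nonneg_nonneg[of "d-1" "x3-x1"] mult_nonneg_nonneg[of "d-1" "x3-x2"] mult_nonneg_nonneg[of "d-1" "x1"] mult_nonneg_nonneg[of "d-1" "x2"] mult_nonneg_nonneg[of "d-1" "x3"] mult_nonneg_nonneg[of "c-a" "x1-x2"] mult_nonneg_nonneg[of "c-a" "x1-x3"] mult_nonneg_nonneg[of "c-a" "x2-x1"] mult_nonneg_nonneg[of "c-a" "x2-x3"] mult_nonneg_nonneg[of "c-a" "x3-x1"] mult_nonneg_nonneg[of "c-a" "x3-x2"] mult_nonneg_nonneg[of "c-a" "x1"] mult_nonneg_nonneg[of "c-a" "x2"] mult_nonneg_nonneg[of "c-a" "x3"] mult_nonneg_nonneg[of "a-c" "x1-x2"] mult_nonneg_nonneg[of "a-c" "x1-x3"] mult_nonneg_nonneg[of "a-c" "x2-x1"] mult_nonneg_nonneg[of "a-c" "x2-x3"] mult_nonneg_nonneg[of "a-c" "x3-x1"] mult_nonneg_nonneg[of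 "a-c" "x3-x2"] mult_nonneg_nonneg[of "a-c" "x1"] mult_nonneg_nonneg[of "a-c" "x2"] mult_nonneg_nonneg[of "a-c" "x3"] mult_nonneg_nonneg[of "d-b" "x1-x2"] mult_nonneg_nonneg[of "d-b" "x1-x3"] mult_nonneg_nonneg[of "d-b" "x2-x1"] mult_nonneg_nonneg[of "d-b" "x2-x3"] mult_nonneg_nonneg[of "d-b" "x3-x1"] mult_nonneg_nonneg[of "d-b" "x3-x2"] mult_nonneg_nonneg[of "d-b" "x1"] mult_nonneg_nonneg[of "d-b" "x2"] mult_nonneg_nonneg[of "d-b" "x3"] mult_nonneg_nonneg[of "b-d" "x1-x2"] mult_nonneg_nonneg[of "b-d" "x1-x3"] mult_nonneg_nonneg[of "b-d" "x2-x1"] mult_nonneg_nonneg[of "b-d" "x2-x3"] mult_nonneg_nonneg[of "b-d" "x3-x1"] mult_nonneg_nonneg[of "b-d" "x3-x2"] mult_nonneg_nonneg[of "b-d" "x1"] mult_nonneg_nonneg[of "b-d" "x2"] mult_nonneg_nonneg[of "b-d" "x3"]; simp add: min_def algebra_simps; linarith)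

lemma gpair_alt: "gpair t g u v = u*(1/t) + v*(1/g) + (1 - 1/t - 1/g)*min u v"
  unfolding gpair_def by simp

lemma inv_max: "(0::real) < p \<Longrightarrow> 0 < q \<Longrightarrow> 1 / max p q = min (1/p) (1/q)"
  by (auto simp: max_def min_def divide_simps)

theorem lemma1:
  fixes \<theta>12 \<gamma>12 \<theta>23 \<gamma>23 x1 x3 :: real
  assumes "\<theta>12 \<in> {0<..<1}" "\<gamma>12 \<in> {0<..<1}" "\<theta>23 \<in> {0<..<1}" "\<gamma>23 \<in> {0<..<1}"
    and "x1 \<ge> 0" "x3 \<ge> 0"
  shows "(\<exists>x2\<ge>0. gchain \<theta>12 \<gamma>12 \<theta>23 \<gamma>23 x1 x2 x3
                  = gpair (max \<theta>12 \<theta>23) (max \<gamma>12 \<gamma>23) x1 x3) \<and>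
         (\<forall>x2\<ge>0. gpair (max \<theta>12 \<theta>23) (max \<gamma>12 \<gamma>23) x1 x3
                  \<le> gchain \<theta>12 \<gamma>12 \<theta>23 \<gamma>23 x1 x2 x3)"
proof
  have p: "\<theta>12 > 0" "\<gamma>12 > 0" "\<theta>23 > 0" "\<gamma>23 > 0" using assms by auto
  have g1: "1/\<theta>12 \<ge> 1" "1/\<gamma>12 \<ge> 1" "1/\<theta>23 \<ge> 1" "1/\<gamma>23 \<ge> 1"
    using assms by auto
  have eq: "gpair (max \<theta>12 \<theta>23) (max \<gamma>12 \<gamma>23) x1 x3
     = x1*min (1/\<theta>12) (1/\<theta>23) + x3*min (1/\<gamma>12) (1/\<gamma>23)
       + (1 - min (1/\<theta>12) (1/\<theta>23) - min (1/\<gamma>12) (1/\<gamma>23))*min x1 x3"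
    using p by (simp add: gpair_alt inv_max)
  show "\<forall>x2\<ge>0. gpair (max \<theta>12 \<theta>23) (max \<gamma>12 \<gamma>23) x1 x3
                  \<le> gchain \<theta>12 \<gamma>12 \<theta>23 \<gamma>23 x1 x2 x3"
  proof (intro allI impI)
    fix x2 :: real assume "x2 \<ge> 0"
    show "gpair (max \<theta>12 \<theta>23) (max \<gamma>12 \<gamma>23) x1 x3
                  \<le> gchain \<theta>12 \<gamma>12 \<theta>23 \<gamma>23 x1 x2 x3"
      unfolding gchain_def gpair_alt inv_max[OF p(1) p(3)] inv_max[OF p(2) p(4)] by (rule G_le[OF g1 assms(5) \<open>x2 \<ge> 0\<close> assms(6)])
  qed
  show "\<exists>x2\<ge>0. gchain \<theta>12 \<gamma>12 \<theta>23 \<gamma>23 x1 x2 x3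
                  = gpair (max \<theta>12 \<theta>23) (max \<gamma>12 \<gamma>23) x1 x3"
  proof (cases "x1 \<le> x3")
    case True
    show ?thesis
    proof (cases "\<gamma>12 \<ge> \<gamma>23")
      case True
      then show ?thesis using \<open>x1 \<le> x3\<close> assms p
        by (intro exI[of _ x3]) (auto simp: gchain_def gpair_def max_def min_def field_simps)
    next
      case False
      then show ?thesis using \<open>x1 \<le> x3\<close> assms p
        by (intro exI[of _ x1]) (auto simp: gchain_def gpair_def max_def min_def field_simps)
    qed
  next
    case False
    show ?thesis
    proof (cases "\<theta>23 \<ge> \<theta>12")
      case True
      then show ?thesis using \<open>\<not> x1 \<le> x3\<close> assms p
        by (intro exI[of _ x1]) (auto simp: gchain_def gpair_def max_def min_def field_simps)
    next
      case False
      then show ?thesis using \<open>\<not> x1 \<le> x3\<close> assms p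
        by (intro exI[of _ x3]) (auto simp: gchain_def gpair_def max_def min_def field_simps)
    qed
  qed
qed

end
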